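(* Let $p$ be a prime and $n$ a positive integer. Then $\mathbb{Z}_n$ admits a proper skew morphism of order $p$ if and only if $p$ divides $n$ and $\gcd(p-1,n)\ge2$. The proper skew morphisms of $\mathbb{Z}_n$ of order $p$ are exactly the permutations $a\mapsto a+u(1+v+v^2+\dots+v^{a-1})$ (for $a\in\{0,1,\dots,n-1\}$), where $u\in\{\tfrac{n}{p},\tfrac{2n}{p},\dots,\tfrac{(p-1)n}{p}\}$ and $v\in\{2,3,\dots,p-1\}$ is such that its multiplicative order modulo $p$ divides $n$. The number of such skew morphisms is $$\Big(\sum_{\substack{k\mid p-1,\ k\mid n\\ k\neq1}}\phi(k)\Big)(p-1),$$ where $\phi$ is Euler's totient function. In particular, $\mathbb{Z}_n$ has at most $p^2-3p+2$ proper skew morphisms of order $p$, with equality if and only if $(p-1)p$ divides $n$.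
   Context: $\mathbb{Z}_n$ is the cyclic group of integers modulo $n$. A skew morphism of a finite group $G$ is a permutation $\varphi$ of $G$ fixing the identity such that for each $a\in G$ there is a non-negative integer $i_a$ with $\varphi(ab)=\varphi(a)\varphi^{i_a}(b)$ for all $b\in G$. A skew morphism that is not a group automorphism is called proper. The order of $\varphi$ is the order of the cyclic group $\langle\varphi\rangle$. *)

theory Defs
  imports "HOL-Number_Theory.Number_Theory"
begin

text \<open>The cyclic group Z_n is modelled by the carrier {0..<n} of nat with addition mod n.
  A map of Z_n is a function nat => nat, only its values on {0..<n} matter.\<close>

definition skew_morphism :: "nat \<Rightarrow> (nat \<Rightarrow> nat) \<Rightarrow> bool" where
  "skew_morphism n \<phi> \<longleftrightarrow>
     bij_betw \<phi> {0..<n} {0..<n} \<and> \<phi> 0 = 0 \<and>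
     (\<forall>a<n. \<exists>i::nat. \<forall>b<n. \<phi> ((a + b) mod n) = (\<phi> a + (\<phi> ^^ i) b) mod n)"

definition is_automorphism :: "nat \<Rightarrow> (nat \<Rightarrow> nat) \<Rightarrow> bool" where
  "is_automorphism n \<phi> \<longleftrightarrow>
     bij_betw \<phi> {0..<n} {0..<n} \<and>
     (\<forall>a<n. \<forall>b<n. \<phi> ((a + b) mod n) = (\<phi> a + \<phi> b) mod n)"

definition proper_skew_morphism :: "nat \<Rightarrow> (nat \<Rightarrow> nat) \<Rightarrow> bool" where
  "proper_skew_morphism n \<phi> \<longleftrightarrow> skew_morphism n \<phi> \<and> \<not> is_automorphism n \<phi>"

definition perm_order :: "nat \<Rightarrow> (nat \<Rightarrow> nat) \<Rightarrow> nat" where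
  "perm_order n \<phi> = (LEAST k. 0 < k \<and> (\<forall>x<n. (\<phi> ^^ k) x = x))"

text \<open>The set of proper skew morphisms of Z_n of order p, normalised to be the identity
  outside the carrier {0..<n} (so that distinct maps of Z_n are distinct functions).\<close>
definition proper_skews_of_order :: "nat \<Rightarrow> nat \<Rightarrow> (nat \<Rightarrow> nat) set" where
  "proper_skews_of_order n p =
     {\<phi>. (\<forall>x. n \<le> x \<longrightarrow> \<phi> x = x) \<and> proper_skew_morphism n \<phi> \<and> perm_order n \<phi> = p}"

definition skew_formula :: "nat \<Rightarrow> nat \<Rightarrow> nat \<Rightarrow> nat \<Rightarrow> nat" where
  "skew_formula n u v a = (if a < n then (a + u * (\<Sum>i<a. v ^ i)) mod n else a)"

end

theory Submission
  imports Defs "HOL-Number_Theory.Number_Theory"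
begin


locale skewp =
  fixes n p :: nat and f :: "nat \<Rightarrow> nat"
  assumes prime: "prime p" and npos: "0 < n"
    and skew: "skew_morphism n f" and ordp: "perm_order n f = p"
    and proper: "\<not> is_automorphism n f"
begin

lemma p_gt1: "1 < p" using prime prime_gt_1_nat by blast

lemma bij: "bij_betw f {0..<n} {0..<n}" using skew unfolding skew_morphism_def by blast
lemma f0: "f 0 = 0" using skew unfolding skew_morphism_def by blast
lemma skew_ex: "a < n \<Longrightarrow> \<exists>i::nat. \<forall>b<n. f ((a + b) mod n) = (f a + (f ^^ i) b) mod n"
  using skew unfolding skew_morphism_def by blast

lemma f_lt: "x < n \<Longrightarrow> f x < n"
  using bij unfolding bij_betw_def by auto

lemma fpow_lt: "x < n \<Longrightarrow> (f ^^ k) x < n"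
  by (induction k) (auto simp: f_lt)

lemma f_inj: "x < n \<Longrightarrow> y < n \<Longrightarrow> f x = f y \<Longrightarrow> x = y"
  using bij unfolding bij_betw_def inj_on_def by auto

lemma fpow_inj: "x < n \<Longrightarrow> y < n \<Longrightarrow> (f ^^ k) x = (f ^^ k) y \<Longrightarrow> x = y"
proof (induction k)
  case (Suc k) then show ?case using f_inj[of "(f ^^ k) x" "(f ^^ k) y"] fpow_lt by simp
qed simp

lemma exists_period: "\<exists>k>0. \<forall>x<n. (f ^^ k) x = x"
proof -
  define F where "F = ({0..<n} \<rightarrow>\<^sub>E {0..<n})"
  define g where "g = (\<lambda>k. restrict (f ^^ k) {0..<n})"
  have finF: "finite F" unfolding F_def by (simp add: finite_PiE)
  have sub: "g ` {..card F} \<subseteq> F" unfolding g_def F_def by (auto simp: fpow_lt)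
  have "\<not> inj_on g {..card F}"
  proof
    assume "inj_on g {..card F}"
    then have "card {..card F} \<le> card F" using card_inj_on_le[OF _ sub finF] by blast
    then show False by simp
  qed
  then obtain i j where ij: "i \<noteq> j" "g i = g j" unfolding inj_on_def by blast
  have main: "\<exists>k>0. \<forall>x<n. (f ^^ k) x = x" if "i < j" "g i = g j" for i j
  proof (intro exI[of _ "j - i"] conjI allI impI)
    show "0 < j - i" using that by simp
    fix x assume x: "x < n"
    have "(f ^^ i) x = (f ^^ j) x" using that x unfolding g_def restrict_def
      by (metis atLeastLessThan_iff zero_le)
    also have "(f ^^ j) x = (f ^^ i) ((f ^^ (j - i)) x)"
      using that by (metis add_diff_inverse_nat comp_apply funpow_add less_imp_le_nat not_le)
    finally show "(f ^^ (j - i)) x = x" using fpow_inj[of x "(f ^^ (j - i)) x" i] x fpow_lt by metis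
  qed
  show ?thesis
    using ij main[of i j] main[of j i] by (cases "i < j") auto
qed

lemma pow_p: "x < n \<Longrightarrow> (f ^^ p) x = x"
  using LeastI_ex[OF exists_period] ordp unfolding perm_order_def by auto

lemma pow_min: "0 < k \<Longrightarrow> k < p \<Longrightarrow> \<exists>x<n. (f ^^ k) x \<noteq> x"
  using not_less_Least[of k "\<lambda>k. 0 < k \<and> (\<forall>x<n. (f ^^ k) x = x)"] ordp
  unfolding perm_order_def by auto

lemma pow_pq: "x < n \<Longrightarrow> (f ^^ (p * q)) x = x"
proof (induction q)
  case (Suc q)
  have "(f ^^ (p * Suc q)) x = (f ^^ p) ((f ^^ (p * q)) x)"
    by (simp add: funpow_add)
  then show ?case using Suc pow_p by simp
qed simp

lemma pow_mod: "x < n \<Longrightarrow> (f ^^ k) x = (f ^^ (k mod p)) x"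
proof -
  assume x: "x < n"
  have "k = k mod p + p * (k div p)" by simp
  then have "(f ^^ k) x = (f ^^ (k mod p)) ((f ^^ (p * (k div p))) x)"
    by (metis comp_apply funpow_add)
  then show ?thesis using pow_pq x by simp
qed

lemma pow_cancel_aux: "i \<le> j \<Longrightarrow> j < p \<Longrightarrow> \<forall>x<n. (f ^^ i) x = (f ^^ j) x \<Longrightarrow> i = j"
proof (rule ccontr)
  assume a: "i \<le> j" "j < p" "\<forall>x<n. (f ^^ i) x = (f ^^ j) x" "i \<noteq> j"
  have "\<forall>x<n. (f ^^ (j - i)) x = x"
  proof (intro allI impI)
    fix x assume x: "x < n"
    have "(f ^^ (p - i)) ((f ^^ i) x) = (f ^^ p) x"
      using a by (metis comp_apply funpow_add le_add_diff_inverse2 less_imp_le_nat le_less_trans)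
    also have "\<dots> = x" using pow_p x by simp
    finally have 1: "(f ^^ (p - i)) ((f ^^ i) x) = x" .
    have "(f ^^ (p - i)) ((f ^^ j) x) = (f ^^ (j - i)) ((f ^^ p) x)"
    proof -
      have "p - i + j = (j - i) + p" using a by simp
      then show ?thesis by (metis comp_apply funpow_add)
    qed
    then have "(f ^^ (p - i)) ((f ^^ j) x) = (f ^^ (j - i)) x" using pow_p x by simp
    then show "(f ^^ (j - i)) x = x" using 1 a x by simp
  qed
  moreover have "0 < j - i" "j - i < p" using a by auto
  ultimately show False using pow_min by blast
qed

lemma pow_eq_mod: "\<forall>x<n. (f ^^ i) x = (f ^^ j) x \<Longrightarrow> i mod p = j mod p"
proof -
  assume h: "\<forall>x<n. (f ^^ i) x = (f ^^ j) x"
  have h2: "\<forall>x<n. (f ^^ (i mod p)) x = (f ^^ (j mod p)) x" using h pow_mod by metis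
  have lt: "i mod p < p" "j mod p < p" using p_gt1 by auto
  show ?thesis
  proof (cases "i mod p \<le> j mod p")
    case True then show ?thesis using pow_cancel_aux h2 lt by blast
  next
    case False then show ?thesis using pow_cancel_aux[of "j mod p" "i mod p"] h2 lt by auto
  qed
qed

end

context skewp begin

definition pi :: "nat \<Rightarrow> nat" where
  "pi a = (SOME i. \<forall>b<n. f ((a + b) mod n) = (f a + (f ^^ i) b) mod n) mod p"

lemma pi_prop: "a < n \<Longrightarrow> b < n \<Longrightarrow> f ((a + b) mod n) = (f a + (f ^^ pi a) b) mod n"
proof -
  assume a: "a < n" and b: "b < n"
  define i where "i = (SOME i. \<forall>b<n. f ((a + b) mod n) = (f a + (f ^^ i) b) mod n)"
  have "\<forall>b<n. f ((a + b) mod n) = (f a + (f ^^ i) b) mod n"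
    unfolding i_def using someI_ex[OF skew_ex[OF a]] .
  then have h: "f ((a + b) mod n) = (f a + (f ^^ i) b) mod n" using b by blast
  have "pi a = i mod p" unfolding pi_def i_def ..
  then show ?thesis using h pow_mod[OF b, of i] by simp
qed

lemma pi_lt: "pi a < p"
  unfolding pi_def using p_gt1 by simp

lemma mod_cancel_lt: "x < n \<Longrightarrow> y < n \<Longrightarrow> (c + x) mod n = (c + y) mod n \<Longrightarrow> x = y"
  by (metis cong_add_lcancel_nat cong_def cong_less_modulus_unique_nat)

lemma pi_unique:
  assumes a: "a < n" and h: "\<forall>b<n. f ((a + b) mod n) = (f a + (f ^^ j) b) mod n"
  shows "pi a = j mod p"
proof -
  have "\<forall>b<n. (f ^^ pi a) b = (f ^^ j) b"
    using pi_prop[OF a] h mod_cancel_lt fpow_lt by metis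
  then have "pi a mod p = j mod p" using pow_eq_mod by blast
  then show ?thesis using pi_lt by simp
qed

lemma pi0: "pi 0 = 1"
proof -
  have "\<forall>b<n. f ((0 + b) mod n) = (f 0 + (f ^^ 1) b) mod n"
    using f0 f_lt by simp
  then show ?thesis using pi_unique[of 0 1] npos p_gt1 by simp
qed

lemma n_gt1: "1 < n"
proof (rule ccontr)
  assume "\<not> 1 < n"
  then have "n = 1" using npos by simp
  then have "\<forall>x<n. (f ^^ 1) x = x" using f0 by simp
  then show False using pow_min[of 1] p_gt1 by auto
qed

lemma pi_ne0: "a < n \<Longrightarrow> pi a \<noteq> 0"
proof
  assume a: "a < n" and z: "pi a = 0"
  have h: "f ((a + b) mod n) = (f a + b) mod n" if "b < n" for b
    using pi_prop[OF a that] z by simp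
  have c0: "[f a + (n - a) = 0] (mod n)"
  proof (cases "a = 0")
    case True then show ?thesis using f0 by (simp add: cong_def)
  next
    case False
    then have "n - a < n" using a by simp
    then have "f ((a + (n - a)) mod n) = (f a + (n - a)) mod n" using h by blast
    then show ?thesis using a f0 by (simp add: cong_def)
  qed
  have "\<forall>x<n. (f ^^ 1) x = x"
  proof (intro allI impI)
    fix x assume x: "x < n"
    define y where "y = (x + (n - a)) mod n"
    have y: "y < n" unfolding y_def using npos by simp
    have "(a + y) mod n = (a + (x + (n - a))) mod n" unfolding y_def by (simp add: mod_simps)
    also have "a + (x + (n - a)) = x + n" using a by simp
    finally have "(a + y) mod n = x" using x by simp
    then have "f x = (f a + y) mod n" using h[OF y] by simp
    then have "[f x = f a + (x + (n - a))] (mod n)" unfolding y_def by (simp add: cong_def mod_simps)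
    also have "[f a + (x + (n - a)) = x + (f a + (n - a))] (mod n)" by (simp add: ac_simps)
    also have "[x + (f a + (n - a)) = x + 0] (mod n)" using cong_add[OF cong_refl[of x] c0] by simp
    finally show "(f ^^ 1) x = x" using f_lt x cong_less_modulus_unique_nat by simp
  qed
  then show False using pow_min[of 1] p_gt1 by auto
qed

lemma exists_pi_ne1: "\<exists>b<n. pi b \<noteq> 1"
proof (rule ccontr)
  assume "\<not> (\<exists>b<n. pi b \<noteq> 1)"
  then have "\<forall>a<n. \<forall>b<n. f ((a + b) mod n) = (f a + f b) mod n"
    using pi_prop by fastforce
  then show False using proper bij unfolding is_automorphism_def by blast
qed

lemma iter_fix: "(f ^^ e) y = y \<Longrightarrow> (f ^^ (e * m)) y = y"
proof (induction m)
  case (Suc m)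
  have "(f ^^ (e * Suc m)) y = (f ^^ (e * m)) ((f ^^ e) y)"
    by (metis add.commute comp_apply funpow_add mult_Suc_right)
  then show ?case using Suc by simp
qed simp

lemma fix_of_unit: "y < n \<Longrightarrow> 0 < e \<Longrightarrow> e < p \<Longrightarrow> (f ^^ e) y = y \<Longrightarrow> f y = y"
proof -
  assume y: "y < n" and e: "0 < e" "e < p" and fy: "(f ^^ e) y = y"
  have "coprime e p" using prime e
    by (metis coprime_commute nat_dvd_not_less prime_imp_coprime_nat)
  then obtain m where m: "[e * m = Suc 0] (mod p)" using cong_solve_coprime_nat by blast
  have "(f ^^ (e * m)) y = y" using iter_fix fy by blast
  moreover have "(e * m) mod p = 1" using m p_gt1 by (simp add: cong_def)
  ultimately have "(f ^^ 1) y = y" using pow_mod[OF y, of "e * m"] by simp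
  then show ?thesis by simp
qed

lemma fix_K: assumes k: "k < n" "pi k = 1" shows "f k = k"
proof -
  obtain b0 where b0: "b0 < n" "pi b0 \<noteq> 1" using exists_pi_ne1 by blast
  define j where "j = pi b0"
  have "pi b0 \<noteq> 0" using pi_ne0 b0 by blast
  then have j: "2 \<le> j" "j < p" using b0 pi_lt unfolding j_def by auto
  have 1: "f ((k + b0) mod n) = (f k + f b0) mod n" using pi_prop[OF k(1) b0(1)] k by simp
  have 2: "f ((b0 + k) mod n) = (f b0 + (f ^^ j) k) mod n" using pi_prop[OF b0(1) k(1)] j_def by simp
  have "(f ^^ j) k = f k"
    using 1 2 mod_cancel_lt[of "(f ^^ j) k" "f k" "f b0"] fpow_lt f_lt k
    by (simp add: add.commute)
  moreover have "(f ^^ j) k = (f ^^ (j - 1)) (f k)"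
  proof -
    obtain j' where "j = Suc j'" using j by (cases j) auto
    then show ?thesis using funpow_swap1[of f j' k] by simp
  qed
  ultimately have "(f ^^ (j - 1)) (f k) = f k" by simp
  then have "f (f k) = f k" using fix_of_unit[of "f k" "j - 1"] j f_lt k by simp
  then show ?thesis using f_inj f_lt k by blast
qed

lemma fix_K_pow: "k < n \<Longrightarrow> pi k = 1 \<Longrightarrow> (f ^^ m) k = k"
  by (induction m) (auto simp: fix_K)

lemma shift_K: "a < n \<Longrightarrow> k < n \<Longrightarrow> pi k = 1 \<Longrightarrow> f ((a + k) mod n) = (f a + k) mod n"
  using pi_prop fix_K_pow by simp

lemma shift_K_pow: assumes "a < n" "k < n" "pi k = 1"
  shows "(f ^^ m) ((a + k) mod n) = ((f ^^ m) a + k) mod n"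
proof (induction m)
  case 0 then show ?case by simp
next
  case (Suc m)
  have "(f ^^ Suc m) ((a + k) mod n) = f (((f ^^ m) a + k) mod n)" using Suc by simp
  also have "\<dots> = (f ((f ^^ m) a) + k) mod n" using shift_K fpow_lt assms by simp
  finally show ?case by simp
qed

lemma K_left: "k < n \<Longrightarrow> pi k = 1 \<Longrightarrow> y < n \<Longrightarrow> f ((k + y) mod n) = (k + f y) mod n"
  using pi_prop fix_K by simp

lemma K_add: assumes "k1 < n" "k2 < n" "pi k1 = 1" "pi k2 = 1"
  shows "pi ((k1 + k2) mod n) = 1"
proof -
  have "\<forall>b<n. f (((k1 + k2) mod n + b) mod n) = (f ((k1 + k2) mod n) + (f ^^ 1) b) mod n"
  proof (intro allI impI)
    fix b assume b: "b < n"
    have "((k1 + k2) mod n + b) mod n = (k1 + (k2 + b) mod n) mod n" by (simp add: mod_simps add.assoc)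
    then have "f (((k1 + k2) mod n + b) mod n) = (k1 + f ((k2 + b) mod n)) mod n"
      using K_left assms npos by simp
    also have "\<dots> = (k1 + (k2 + f b) mod n) mod n" using K_left assms b by simp
    also have "\<dots> = ((k1 + k2) mod n + f b) mod n" by (simp add: mod_simps add.assoc)
    also have "f ((k1 + k2) mod n) = (k1 + k2) mod n"
      using K_left[of k1 k2] assms fix_K by simp
    ultimately show "f (((k1 + k2) mod n + b) mod n) = (f ((k1 + k2) mod n) + (f ^^ 1) b) mod n"
      by simp
  qed
  then show ?thesis using pi_unique[of "(k1 + k2) mod n" 1] npos p_gt1 by simp
qed

lemma K_mult: "z < n \<Longrightarrow> pi z = 1 \<Longrightarrow> pi ((l * z) mod n) = 1"
proof (induction l)
  case 0 then show ?case using pi0 by simp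
next
  case (Suc l)
  have "(Suc l * z) mod n = ((l * z) mod n + z) mod n" by (simp add: mod_simps add.commute)
  then show ?case using K_add[of "(l * z) mod n" z] Suc npos by simp
qed

lemma K_shift_pi: assumes x: "x < n" and w: "w < n" "pi w = 1"
  shows "pi ((x + w) mod n) = pi x"
proof -
  have "\<forall>y<n. f (((x + w) mod n + y) mod n) = (f ((x + w) mod n) + (f ^^ pi x) y) mod n"
  proof (intro allI impI)
    fix y assume y: "y < n"
    have "((x + w) mod n + y) mod n = (w + (x + y) mod n) mod n" by (simp add: mod_simps ac_simps)
    then have "f (((x + w) mod n + y) mod n) = (w + f ((x + y) mod n)) mod n"
      using K_left w npos by simp
    also have "\<dots> = (w + (f x + (f ^^ pi x) y) mod n) mod n" using pi_prop x y by simp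
    also have "f ((x + w) mod n) = (w + f x) mod n" using K_left w x by (simp add: add.commute)
    ultimately show "f (((x + w) mod n + y) mod n) = (f ((x + w) mod n) + (f ^^ pi x) y) mod n"
      by (simp add: mod_simps ac_simps)
  qed
  then show ?thesis using pi_unique[of "(x + w) mod n" "pi x"] npos pi_lt by simp
qed

end

context skewp begin

lemma diff_K: assumes a: "a < n" and b: "b < n" and eq: "pi a = pi b"
  shows "pi ((a + (n - b)) mod n) = 1"
proof -
  define z where "z = (a + (n - b)) mod n"
  have z: "z < n" unfolding z_def using npos by simp
  define P where "P = f ^^ pi a"
  have key: "f ((z + x) mod n) = (f z + f x) mod n" if x: "x < n" for x
  proof -
    define y where "y = (x + (n - b)) mod n"
    have y: "y < n" unfolding y_def using npos by simp
    have "(b + y) mod n = (b + (x + (n - b))) mod n" unfolding y_def by (simp add: mod_simps)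
    also have "b + (x + (n - b)) = x + n" using b by simp
    finally have by_: "(b + y) mod n = x" using x by simp
    have ay: "(a + y) mod n = (z + x) mod n" unfolding y_def z_def by (simp add: mod_simps ac_simps)
    define y0 where "y0 = (n - b) mod n"
    have y0: "y0 < n" unfolding y0_def using npos by simp
    have "(b + y0) mod n = (b + (n - b)) mod n" unfolding y0_def by (simp add: mod_simps)
    also have "b + (n - b) = n" using b by simp
    finally have by0: "(b + y0) mod n = 0" by simp
    have ay0: "(a + y0) mod n = z" unfolding y0_def z_def by (simp add: mod_simps)
    have e1: "f x = (f b + P y) mod n" using pi_prop[OF b y] by_ eq P_def by simp
    have e2: "f ((z + x) mod n) = (f a + P y) mod n" using pi_prop[OF a y] ay P_def by simp
    have e3: "0 = (f b + P y0) mod n" using pi_prop[OF b y0] by0 eq P_def f0 by simp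
    have e4: "f z = (f a + P y0) mod n" using pi_prop[OF a y0] ay0 P_def by simp
    have "[f z + f x = (f a + P y0) + (f b + P y)] (mod n)"
      using e1 e4 by (simp add: cong_def mod_simps)
    also have "[(f a + P y0) + (f b + P y) = (f a + P y) + (f b + P y0)] (mod n)"
      by (simp add: ac_simps)
    also have "[(f a + P y) + (f b + P y0) = (f a + P y) + 0] (mod n)"
      using e3 by (metis add.right_neutral mod_add_right_eq cong_def)
    also have "[(f a + P y) + 0 = f ((z + x) mod n)] (mod n)"
      using e2 by (simp add: cong_def)
    finally have "[f z + f x = f ((z + x) mod n)] (mod n)" .
    then show ?thesis using f_lt npos by (simp add: cong_def)
  qed
  have "\<forall>x<n. f ((z + x) mod n) = (f z + (f ^^ 1) x) mod n" using key by simp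
  then have "pi z = 1 mod p" using pi_unique[OF z] by blast
  then show ?thesis using p_gt1 z_def by simp
qed

lemma K_orbit: assumes b: "b < n" and z: "z < n" "pi z = 1" and fe: "(f ^^ e) b = (b + z) mod n"
  shows "(f ^^ (e * l)) b = (b + (l * z) mod n) mod n"
proof (induction l)
  case 0 then show ?case using b by simp
next
  case (Suc l)
  have "(f ^^ (e * Suc l)) b = (f ^^ (e * l)) ((f ^^ e) b)"
    by (metis add.commute comp_apply funpow_add mult_Suc_right)
  also have "\<dots> = ((f ^^ (e * l)) b + z) mod n" using fe shift_K_pow b z by simp
  also have "\<dots> = (b + (Suc l * z) mod n) mod n" using Suc by (simp add: mod_simps ac_simps)
  finally show ?case .
qed

lemma f_shift: assumes a: "a < n" shows "\<exists>w<n. pi w = 1 \<and> f a = (a + w) mod n"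
proof -
  define g where "g = (\<lambda>i. pi ((f ^^ i) a))"
  have sub: "g ` {0..<p} \<subseteq> {1..<p}" unfolding g_def using pi_lt pi_ne0 fpow_lt a
    by (auto simp: Suc_le_eq)
  have "\<not> inj_on g {0..<p}"
  proof
    assume "inj_on g {0..<p}"
    then have "card {0..<p} \<le> card {1..<p}" using card_inj_on_le[OF _ sub] by blast
    then show False using p_gt1 by simp
  qed
  then obtain i j where ij0: "i < p" "j < p" "i \<noteq> j" "g i = g j"
    unfolding inj_on_def by auto
  have "\<exists>i j. i < j \<and> j < p \<and> g i = g j"
  proof (cases "i < j")
    case True then show ?thesis using ij0 by blast
  next
    case False then have "j < i" using ij0 by simp
    then show ?thesis using ij0 by metis
  qed
  then obtain i j where ij: "i < j" "j < p" "g i = g j" by blast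
  define b where "b = (f ^^ i) a"
  define c where "c = (f ^^ j) a"
  have b: "b < n" and c: "c < n" unfolding b_def c_def using fpow_lt a by auto
  define z where "z = (c + (n - b)) mod n"
  have z: "z < n" "pi z = 1" using diff_K[OF c b] ij(3) unfolding g_def b_def c_def z_def
    using npos by auto
  have cz: "c = (b + z) mod n"
  proof -
    have "(b + z) mod n = (b + (c + (n - b))) mod n" unfolding z_def by (simp add: mod_simps)
    also have "b + (c + (n - b)) = c + n" using b by simp
    finally show ?thesis using c by simp
  qed
  define e where "e = j - i"
  have e: "0 < e" "e < p" using ij unfolding e_def by auto
  have fe: "(f ^^ e) b = (b + z) mod n"
  proof -
    have "j = e + i" using ij unfolding e_def by simp
    then have "c = (f ^^ e) b" unfolding c_def b_def by (simp add: funpow_add)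
    then show ?thesis using cz by simp
  qed
  have "coprime e p" using prime e
    by (metis coprime_commute nat_dvd_not_less prime_imp_coprime_nat)
  then obtain l where l: "[e * l = Suc 0] (mod p)" using cong_solve_coprime_nat by blast
  define w where "w = (l * z) mod n"
  have w: "w < n" "pi w = 1" unfolding w_def using K_mult z npos by auto
  have "f b = (f ^^ (e * l)) b"
  proof -
    have "(e * l) mod p = 1" using l p_gt1 by (simp add: cong_def)
    then show ?thesis using pow_mod[OF b, of "e * l"] by simp
  qed
  also have "\<dots> = (b + w) mod n" using K_orbit[OF b z fe] w_def by simp
  finally have fb: "f b = (b + w) mod n" .
  have bk: "(f ^^ (p - i)) b = a"
  proof -
    have "(f ^^ (p - i)) b = (f ^^ (p - i + i)) a" unfolding b_def by (simp add: funpow_add)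
    also have "p - i + i = p" using ij by simp
    finally show ?thesis using pow_p a by simp
  qed
  have "f a = f ((f ^^ (p - i)) b)" using bk by simp
  also have "\<dots> = (f ^^ (p - i)) (f b)" by (simp add: funpow_swap1)
  also have "\<dots> = ((f ^^ (p - i)) b + w) mod n" using fb shift_K_pow b w by simp
  also have "\<dots> = (a + w) mod n" using bk by simp
  finally show ?thesis using w by blast
qed

lemma pi_f: "a < n \<Longrightarrow> pi (f a) = pi a"
  using f_shift K_shift_pi by metis

lemma pi_fpow: "a < n \<Longrightarrow> pi ((f ^^ m) a) = pi a"
  by (induction m) (auto simp: pi_f fpow_lt)

lemma pow_shift: assumes b: "b < n" and y: "y < n"
  shows "(f ^^ m) ((b + y) mod n) = ((f ^^ m) b + (f ^^ (m * pi b)) y) mod n"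
proof (induction m)
  case 0 then show ?case by simp
next
  case (Suc m)
  have "(f ^^ Suc m) ((b + y) mod n) = f (((f ^^ m) b + (f ^^ (m * pi b)) y) mod n)"
    using Suc by simp
  also have "\<dots> = (f ((f ^^ m) b) + (f ^^ pi ((f ^^ m) b)) ((f ^^ (m * pi b)) y)) mod n"
    using pi_prop fpow_lt b y by simp
  also have "\<dots> = ((f ^^ Suc m) b + (f ^^ (Suc m * pi b)) y) mod n"
  proof -
    have "(f ^^ (pi b + m * pi b)) y = (f ^^ pi b) ((f ^^ (m * pi b)) y)" by (simp add: funpow_add)
    then show ?thesis using pi_fpow[OF b, of m] by (simp add: add.commute)
  qed
  finally show ?case .
qed

lemma pi_mult: assumes a: "a < n" and b: "b < n"
  shows "pi ((a + b) mod n) = (pi a * pi b) mod p"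
proof -
  have "\<forall>y<n. f (((a + b) mod n + y) mod n) = (f ((a + b) mod n) + (f ^^ (pi a * pi b)) y) mod n"
  proof (intro allI impI)
    fix y assume y: "y < n"
    have "((a + b) mod n + y) mod n = (a + (b + y) mod n) mod n" by (simp add: mod_simps add.assoc)
    then have "f (((a + b) mod n + y) mod n) = (f a + (f ^^ pi a) ((b + y) mod n)) mod n"
      using pi_prop a npos by simp
    also have "\<dots> = (f a + ((f ^^ pi a) b + (f ^^ (pi a * pi b)) y) mod n) mod n"
      using pow_shift b y by simp
    also have "\<dots> = ((f a + (f ^^ pi a) b) mod n + (f ^^ (pi a * pi b)) y) mod n"
      by (simp add: mod_simps add.assoc)
    also have "\<dots> = (f ((a + b) mod n) + (f ^^ (pi a * pi b)) y) mod n"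
      using pi_prop a b by simp
    finally show "f (((a + b) mod n + y) mod n) = (f ((a + b) mod n) + (f ^^ (pi a * pi b)) y) mod n" .
  qed
  then show ?thesis using pi_unique[of "(a + b) mod n"] npos by simp
qed

end


lemma mod_mult_cong_aux:
  fixes x u p n :: nat
  assumes "n dvd p * u"
  shows "[(x mod p) * u = x * u] (mod n)"
proof -
  have e: "x * u = (x mod p) * u + (x div p) * (p * u)"
    using div_mult_mod_eq[of x p] by (metis add.commute add_mult_distrib mult.assoc mult.commute)
  have "[(x mod p) * u + (x div p) * (p * u) = (x mod p) * u + 0] (mod n)"
    using assms by (intro cong_add) (auto simp: cong_0_iff)
  then show ?thesis using e by (simp add: cong_sym)
qed

context skewp begin

lemma pi_pow: "a < n \<Longrightarrow> pi a = (pi 1) ^ a mod p"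
proof (induction a)
  case 0 then show ?case using pi0 p_gt1 by simp
next
  case (Suc a)
  have "pi (Suc a) = pi ((a + 1) mod n)" using Suc by simp
  also have "\<dots> = (pi a * pi 1) mod p" using pi_mult[of a 1] Suc n_gt1 by simp
  also have "\<dots> = (pi 1 ^ a mod p * pi 1) mod p" using Suc by simp
  also have "\<dots> = pi 1 ^ Suc a mod p" by (metis mod_mult_left_eq mult.commute power_Suc)
  finally show ?case .
qed

lemma v_n: "[pi 1 ^ n = 1] (mod p)"
proof -
  have "pi 0 = (pi (n - 1) * pi 1) mod p"
    using pi_mult[of "n - 1" 1] n_gt1 by simp
  also have "\<dots> = (pi 1 ^ (n - 1) mod p * pi 1) mod p" using pi_pow[of "n - 1"] npos by simp
  also have "\<dots> = pi 1 ^ n mod p"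
    using npos by (simp add: mod_mult_left_eq power_Suc2[symmetric] del: power_Suc)
  finally show ?thesis using pi0 p_gt1 by (simp add: cong_def)
qed

lemma v_ne1: "pi 1 \<noteq> 1"
proof
  assume "pi 1 = 1"
  then have "\<forall>a<n. pi a = 1" using pi_pow p_gt1 by simp
  then show False using exists_pi_ne1 by blast
qed

lemma v_range: "2 \<le> pi 1" "pi 1 \<le> p - 1"
  using v_ne1 pi_ne0[of 1] n_gt1 pi_lt[of 1] by auto

lemma classification:
  "p dvd n \<and> (\<exists>k v. 1 \<le> k \<and> k \<le> p - 1 \<and> 2 \<le> v \<and> v \<le> p - 1 \<and> ord p v dvd n \<and>
      (\<forall>a<n. f a = skew_formula n (k * (n div p)) v a))"
proof -
  define v where "v = pi 1"
  obtain u where u: "u < n" "pi u = 1" "f 1 = (1 + u) mod n" using f_shift[of 1] n_gt1 by blast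
  have orb: "(f ^^ i) 1 = (1 + i * u) mod n" for i
  proof (induction i)
    case 0 then show ?case using n_gt1 by simp
  next
    case (Suc i)
    have "(f ^^ Suc i) 1 = (f ^^ i) (f 1)" by (simp add: funpow_swap1)
    also have "\<dots> = ((f ^^ i) 1 + u) mod n" using u shift_K_pow[of 1 u i] n_gt1 by simp
    also have "\<dots> = (1 + Suc i * u) mod n" using Suc by (simp add: mod_simps ac_simps)
    finally show ?case .
  qed
  have pu: "n dvd p * u"
  proof -
    have "(1 + p * u) mod n = 1 mod n" using orb[of p] pow_p[of 1] n_gt1 by simp
    then have "[1 + p * u = 1 + 0] (mod n)" by (simp add: cong_def)
    then have "[p * u = 0] (mod n)" using cong_add_lcancel_nat by blast
    then show ?thesis by (simp add: cong_0_iff)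
  qed
  have form: "f a = (a + u * (\<Sum>i<a. v ^ i)) mod n" if "a < n" for a
    using that
  proof (induction a)
    case 0 then show ?case using f0 by simp
  next
    case (Suc a)
    have a: "a < n" using Suc by simp
    have "f (Suc a) = f ((a + 1) mod n)" using Suc by simp
    also have "\<dots> = (f a + (f ^^ pi a) 1) mod n" using pi_prop[of a 1] a n_gt1 by simp
    also have "\<dots> = (f a + (1 + pi a * u) mod n) mod n" using orb by simp
    finally have "[f (Suc a) = f a + (1 + (v ^ a mod p) * u)] (mod n)"
      using pi_pow[OF a] v_def by (simp add: cong_def mod_simps)
    also have "[f a + (1 + (v ^ a mod p) * u) = f a + (1 + v ^ a * u)] (mod n)"
      using mod_mult_cong_aux[OF pu, of "v ^ a"] by (intro cong_add cong_refl)
    also have "[f a + (1 + v ^ a * u) = (a + u * (\<Sum>i<a. v ^ i)) + (1 + v ^ a * u)] (mod n)"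
      using Suc a by (intro cong_add cong_refl) (simp add: cong_def)
    also have "(a + u * (\<Sum>i<a. v ^ i)) + (1 + v ^ a * u) = Suc a + u * (\<Sum>i<Suc a. v ^ i)"
      by (simp add: algebra_simps)
    finally show ?case using f_lt Suc by (simp add: cong_def)
  qed
  have u0: "u \<noteq> 0"
  proof
    assume "u = 0"
    then have "\<forall>x<n. (f ^^ 1) x = x" using form by simp
    then show False using pow_min[of 1] p_gt1 by auto
  qed
  have pn: "p dvd n"
  proof (rule ccontr)
    assume "\<not> p dvd n"
    then have "coprime n p" using prime by (metis coprime_commute prime_imp_coprime)
    then have "n dvd u" using pu by (simp add: coprime_dvd_mult_right_iff)
    then show False using u u0 by (auto dest: dvd_imp_le)
  qed
  define m where "m = n div p"
  have nm: "n = p * m" unfolding m_def using pn by simp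
  have "m dvd u" using pu nm p_gt1 by simp
  then obtain k where k: "u = k * m" by (auto simp: dvd_def mult.commute)
  have k1: "1 \<le> k" using k u0 by (cases k) auto
  have "k * m < p * m" using k nm u by simp
  then have "k < p" by simp
  then have kp: "k \<le> p - 1" by simp
  have ordv: "ord p v dvd n" using v_n ord_divides v_def by blast
  have "\<forall>a<n. f a = skew_formula n (k * (n div p)) v a"
    using form k m_def unfolding skew_formula_def by simp
  then show ?thesis using pn k1 kp ordv v_range v_def by blast
qed

end


lemma geom_nat: "1 \<le> (v::nat) \<Longrightarrow> (v - 1) * (\<Sum>i<a. v ^ i) + 1 = v ^ a"
proof (induction a)
  case (Suc a)
  have "(v - 1) * (\<Sum>i<Suc a. v ^ i) + 1 = ((v - 1) * (\<Sum>i<a. v ^ i) + 1) + (v - 1) * v ^ a"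
    by (simp add: algebra_simps)
  also have "\<dots> = v ^ a + (v - 1) * v ^ a" using Suc by simp
  also have "\<dots> = v ^ Suc a" using Suc.prems by (simp add: algebra_simps)
  finally show ?case .
qed simp

lemma S_add: "(\<Sum>i<a + b. (v::nat) ^ i) = (\<Sum>i<a. v ^ i) + v ^ a * (\<Sum>i<b. v ^ i)"
  by (induction b) (simp_all add: algebra_simps power_add)

locale formula_ctx =
  fixes n p k v :: nat
  assumes prime: "prime p" and npos: "0 < n" and pn: "p dvd n"
    and k1: "1 \<le> k" and kp: "k \<le> p - 1" and v2: "2 \<le> v" and vp: "v \<le> p - 1"
    and ordv: "ord p v dvd n"
begin

definition m where "m = n div p"
definition u where "u = k * m"
definition S where "S a = (\<Sum>i<a. v ^ i)"
abbreviation g where "g \<equiv> skew_formula n u v"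

lemma p_gt1: "1 < p" using prime prime_gt_1_nat by blast
lemma p3: "3 \<le> p" using v2 vp by simp
lemma nm: "n = p * m" unfolding m_def using pn by simp
lemma m_pos: "0 < m" using nm npos by (cases m) auto
lemma n_ge: "p \<le> n" using pn npos dvd_imp_le by blast
lemma n3: "3 \<le> n" using n_ge p3 by simp
lemma k_lt: "k < p" using kp p_gt1 by simp
lemma u_lt: "u < n" unfolding u_def using nm k_lt m_pos by (metis mult_less_mono1)

lemma coprime_lt: "0 < x \<Longrightarrow> x < p \<Longrightarrow> coprime x p"
  using prime by (metis coprime_commute nat_dvd_not_less prime_imp_coprime)

lemma ord_dvd_m: "ord p v dvd m"
proof -
  have cv: "coprime v p" using coprime_lt v2 vp by simp
  have "\<not> p dvd v" using v2 vp by (auto dest: dvd_imp_le)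
  then have "[v ^ (p - 1) = 1] (mod p)" using fermat_theorem prime by blast
  then have d1: "ord p v dvd p - 1" using ord_divides by blast
  have "coprime (ord p v) p"
  proof -
    have "coprime (p - 1) p" using coprime_lt p_gt1 by simp
    then show ?thesis using d1 coprime_imp_coprime by (metis coprime_commute dvd_trans gcd_nat.refl)
  qed
  then show ?thesis using ordv nm by (metis coprime_dvd_mult_right_iff mult.commute)
qed

lemma vm: "[v ^ m = 1] (mod p)" using ord_dvd_m ord_divides by blast

lemma S_mod: "[S a = S (a mod m)] (mod p)"
proof -
  have pw: "[v ^ a = v ^ (a mod m)] (mod p)"
  proof -
    have "v ^ a = v ^ (a mod m) * (v ^ m) ^ (a div m)"
      by (metis div_mult_mod_eq power_add power_mult add.commute mult.commute)
    also have "[\<dots> = v ^ (a mod m) * 1 ^ (a div m)] (mod p)"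
      using vm by (intro cong_mult cong_refl cong_pow)
    finally show ?thesis by simp
  qed
  have "[(v - 1) * S a + 1 = (v - 1) * S (a mod m) + 1] (mod p)"
    using geom_nat[of v] v2 pw unfolding S_def by simp
  then have "[(v - 1) * S a = (v - 1) * S (a mod m)] (mod p)"
    by (metis add.commute cong_add_lcancel_nat)
  moreover have "coprime (v - 1) p" using coprime_lt v2 vp by simp
  ultimately show ?thesis using cong_mult_lcancel_nat by blast
qed

lemma uS: "a mod m = a' mod m \<Longrightarrow> [u * S a = u * S a'] (mod n)"
proof -
  assume h: "a mod m = a' mod m"
  have "[S a = S a'] (mod p)" using S_mod[of a] S_mod[of a'] h by (metis cong_sym cong_trans)
  then have "[m * S a = m * S a'] (mod m * p)" by (simp add: cong_def mod_mult_mult1)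
  then have "[k * (m * S a) = k * (m * S a')] (mod n)" using nm by (simp add: cong_scalar_left mult.commute)
  then show ?thesis unfolding u_def by (simp add: mult.assoc)
qed

lemma g_def': "a < n \<Longrightarrow> g a = (a + u * S a) mod n"
  unfolding skew_formula_def S_def by simp

lemma g_lt: "a < n \<Longrightarrow> g a < n" using g_def' npos by simp

lemma mod_n_m: "(x mod n) mod m = x mod m"
proof -
  have "m dvd n" using nm dvd_triv_right by metis
  then show ?thesis by (simp add: mod_mod_cancel)
qed

lemma g_pow: "a < n \<Longrightarrow> (g ^^ j) a = (a + j * u * S a) mod n"
proof (induction j)
  case 0 then show ?case by simp
next
  case (Suc j)
  define x where "x = (a + j * u * S a) mod n"
  have x: "x < n" unfolding x_def using npos by simp
  have "j * u * S a = m * (j * k * S a)" unfolding u_def by (simp add: ac_simps)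
  then have xm: "x mod m = a mod m" unfolding x_def mod_n_m by (metis mod_mult_self2)
  have eq1: "(g ^^ Suc j) a = g x" using Suc x_def by simp
  have lt: "(g ^^ Suc j) a < n" using eq1 g_lt x by simp
  have "(g ^^ Suc j) a = g x" using eq1 .
  also have "\<dots> = (x + u * S x) mod n" using g_def' x by simp
  finally have "[(g ^^ Suc j) a = x + u * S x] (mod n)" by (simp add: cong_def)
  also have "[x + u * S x = x + u * S a] (mod n)" using uS[OF xm] by (intro cong_add cong_refl)
  also have "[x + u * S a = (a + j * u * S a) + u * S a] (mod n)" unfolding x_def by (simp add: cong_def mod_simps)
  also have "(a + j * u * S a) + u * S a = a + Suc j * u * S a" by (simp add: algebra_simps)
  finally show ?case using lt by (simp add: cong_def)
qed

end

context formula_ctx begin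

lemma pu0: "[p * u = 0] (mod n)"
proof -
  have "p * u = k * n" unfolding u_def using nm by simp
  then show ?thesis by (simp add: cong_0_iff)
qed

lemma g_pow_p: "a < n \<Longrightarrow> (g ^^ p) a = a"
proof -
  assume a: "a < n"
  have "[a + p * u * S a = a + 0] (mod n)"
  proof -
    have "n dvd p * u" using pu0 by (simp add: cong_0_iff)
    then have "n dvd p * u * S a" by (rule dvd_mult2)
    then show ?thesis by (intro cong_add cong_refl) (simp add: cong_0_iff)
  qed
  then show ?thesis using g_pow[OF a, of p] a by (simp add: cong_def)
qed

lemma S1: "S 1 = 1" unfolding S_def by simp

lemma g_pow_1: "0 < j \<Longrightarrow> j < p \<Longrightarrow> (g ^^ j) 1 \<noteq> 1"
proof
  assume j: "0 < j" "j < p" and eq: "(g ^^ j) 1 = 1"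
  have "(1 + j * u) mod n = 1 mod n" using g_pow[of 1 j] eq n3 S1 by simp
  then have "[1 + j * u = 1 + 0] (mod n)" by (simp add: cong_def)
  then have "n dvd j * u" using cong_add_lcancel_nat cong_0_iff by blast
  then have "m * p dvd m * (j * k)" using nm unfolding u_def by (simp add: ac_simps)
  then have "p dvd j * k" using m_pos by simp
  then have "p dvd j \<or> p dvd k" using prime prime_dvd_mult_iff by blast
  then show False using j k1 k_lt by (auto dest: dvd_imp_le)
qed

lemma g_order: "perm_order n g = p"
  unfolding perm_order_def
proof (rule Least_equality)
  show "0 < p \<and> (\<forall>x<n. (g ^^ p) x = x)" using p_gt1 g_pow_p by simp
next
  fix y assume y: "0 < y \<and> (\<forall>x<n. (g ^^ y) x = x)"
  show "p \<le> y"
  proof (rule ccontr)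
    assume "\<not> p \<le> y"
    then show False using g_pow_1[of y] y n3 by auto
  qed
qed

lemma g_bij: "bij_betw g {0..<n} {0..<n}"
proof (rule bij_betw_byWitness[where f' = "g ^^ (p - 1)"])
  have pp: "Suc (p - 1) = p" using p_gt1 by simp
  show "\<forall>a\<in>{0..<n}. (g ^^ (p - 1)) (g a) = a"
    using g_pow_p pp by (metis atLeastLessThan_iff funpow_Suc_right comp_apply)
  show "\<forall>a\<in>{0..<n}. g ((g ^^ (p - 1)) a) = a"
    using g_pow_p pp by (metis atLeastLessThan_iff funpow.simps(2) comp_apply)
  show "g ` {0..<n} \<subseteq> {0..<n}" using g_lt by auto
  have "(g ^^ j) a < n" if "a < n" for a j using that by (induction j) (auto simp: g_lt)
  then show "(g ^^ (p - 1)) ` {0..<n} \<subseteq> {0..<n}" by auto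
qed

lemma g0: "g 0 = 0" using g_def'[of 0] npos unfolding S_def by simp

lemma g_skew: assumes a: "a < n" and b: "b < n"
  shows "g ((a + b) mod n) = (g a + (g ^^ (v ^ a)) b) mod n"
proof -
  define c where "c = (a + b) mod n"
  have c: "c < n" unfolding c_def using npos by simp
  have cm: "c mod m = (a + b) mod m" unfolding c_def mod_n_m ..
  have "[g c = c + u * S c] (mod n)" using g_def'[OF c] by (simp add: cong_def)
  also have "[c + u * S c = (a + b) + u * S (a + b)] (mod n)"
    using uS[OF cm] unfolding c_def by (intro cong_add) (simp_all add: cong_def)
  also have "(a + b) + u * S (a + b) = (a + u * S a) + (b + v ^ a * u * S b)"
    unfolding S_def S_add by (simp add: algebra_simps)
  also have "[(a + u * S a) + (b + v ^ a * u * S b) = g a + (g ^^ (v ^ a)) b] (mod n)"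
    using g_def'[OF a] g_pow[OF b, of "v ^ a"] by (intro cong_add) (simp_all add: cong_def)
  finally show ?thesis using g_lt c unfolding c_def by (simp add: cong_def)
qed

lemma g_skew_morphism: "skew_morphism n g"
  unfolding skew_morphism_def using g_bij g0 g_skew by blast

lemma g_not_aut: "\<not> is_automorphism n g"
proof
  assume "is_automorphism n g"
  then have h0: "\<forall>a<n. \<forall>b<n. g ((a + b) mod n) = (g a + g b) mod n" unfolding is_automorphism_def by blast
  have "1 < n" using n3 by simp
  then have h: "g ((1 + 1) mod n) = (g 1 + g 1) mod n" using h0 by blast
  have two: "(1 + 1) mod n = (2::nat)" using n3 by simp
  have h2: "g 2 = (g 1 + g 1) mod n" using h unfolding two .
  have g2: "g 2 = (2 + u * (1 + v)) mod n" using g_def'[of 2] n3 unfolding S_def by (simp add: numeral_2_eq_2)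
  have g1: "g 1 = (1 + u) mod n" using g_def'[of 1] n3 S1 by simp
  have "(2 + u * (1 + v)) mod n = ((1 + u) + (1 + u)) mod n" using h2 g2 g1 by (simp add: mod_add_eq)
  moreover have "2 + u * (1 + v) = (2 + u) + u * v" "(1 + u) + (1 + u) = (2 + u) + u * 1" by (simp_all add: algebra_simps)
  ultimately have "[(2 + u) + u * v = (2 + u) + u * 1] (mod n)" unfolding cong_def by simp
  then have "[u * v = u * 1] (mod n)" using cong_add_lcancel_nat by blast
  then have "[m * (k * v) = m * (k * 1)] (mod m * p)" unfolding u_def using nm by (simp add: ac_simps)
  then have "[k * v = k * 1] (mod p)" using m_pos by (simp add: cong_def mod_mult_mult1)
  moreover have "coprime k p" using coprime_lt k1 k_lt by simp
  ultimately have "[v = 1] (mod p)" using cong_mult_lcancel_nat by blast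
  then have "v = 1" using vp p_gt1 cong_less_modulus_unique_nat by (metis le_less_trans diff_less zero_less_one less_trans)
  then show False using v2 by simp
qed

lemma g_in: "g \<in> proper_skews_of_order n p"
  unfolding proper_skews_of_order_def proper_skew_morphism_def
  using g_skew_morphism g_not_aut g_order by (auto simp: skew_formula_def)

end


lemma prime_ord_dvd: fixes p x :: nat shows "prime p \<Longrightarrow> 0 < x \<Longrightarrow> x < p \<Longrightarrow> ord p x dvd p - 1"
proof -
  assume p: "prime p" and x: "0 < x" "x < p"
  have "\<not> p dvd x" using x by (auto dest: dvd_imp_le)
  then have "[x ^ (p - 1) = 1] (mod p)" using fermat_theorem p by blast
  then show ?thesis using ord_divides by blast
qed

lemma ord_ne1: fixes p x :: nat shows "prime p \<Longrightarrow> 2 \<le> x \<Longrightarrow> x < p \<Longrightarrow> ord p x \<noteq> 1"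
proof
  assume p: "prime p" and x: "2 \<le> x" "x < p" and o: "ord p x = 1"
  then have "[x = 1] (mod p)" using ord_eq_Suc_0_iff by simp
  then have "x = 1" using x cong_less_modulus_unique_nat[of x 1 p] by simp
  then show False using x by simp
qed

lemma exists_with_ord:
  assumes p: "prime p" and d: "d dvd p - 1" and d1: "d \<noteq> 1"
  shows "\<exists>x. 2 \<le> x \<and> x \<le> p - 1 \<and> ord p x = d"
proof -
  have p1: "1 < p" using p prime_gt_1_nat by blast
  have "d \<noteq> 0"
  proof
    assume "d = 0" then have "p - 1 = 0" using d by simp
    then show False using p1 by simp
  qed
  then have "card {x \<in> totatives p. ord p x = d} = totient d" "0 < totient d"
    using prime_card_elements_with_ord_eq_totient[OF p1 p, of d] d by auto
  then have "{x \<in> totatives p. ord p x = d} \<noteq> {}" by (intro notI) simp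
  then obtain x where x: "x \<in> totatives p" "ord p x = d" by blast
  have "x \<noteq> 1" using x d1 by auto
  moreover have "x \<noteq> p" using x p1 by (auto simp: totatives_def)
  ultimately show ?thesis using x by (intro exI[of _ x]) (auto simp: totatives_def)
qed

lemma skewp_intro:
  "prime p \<Longrightarrow> 0 < n \<Longrightarrow> proper_skew_morphism n f \<Longrightarrow> perm_order n f = p \<Longrightarrow> skewp n p f"
  by (intro skewp.intro) (auto simp: proper_skew_morphism_def)

context formula_ctx begin
lemma g1: "g 1 = (1 + u) mod n" using g_def'[of 1] n3 S1 by simp
lemma g2: "g 2 = (2 + u * (1 + v)) mod n" using g_def'[of 2] n3 unfolding S_def by (simp add: numeral_2_eq_2)
end

lemma formula_inj:
  assumes c1: "formula_ctx n p k v" and c2: "formula_ctx n p k' v'"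
    and eq: "skew_formula n (k * (n div p)) v = skew_formula n (k' * (n div p)) v'"
  shows "k = k' \<and> v = v'"
proof -
  interpret A: formula_ctx n p k v by (rule c1)
  interpret B: formula_ctx n p k' v' by (rule c2)
  have m: "A.m = B.m" unfolding A.m_def B.m_def ..
  have "(1 + A.u) mod n = (1 + B.u) mod n" using A.g1 B.g1 eq unfolding A.u_def B.u_def A.m_def B.m_def by simp
  then have "[1 + A.u = 1 + B.u] (mod n)" unfolding cong_def .
  then have "[A.u = B.u] (mod n)" using cong_add_lcancel_nat by blast
  then have "A.u = B.u" using A.u_lt B.u_lt cong_less_modulus_unique_nat by blast
  then have kk: "k = k'" unfolding A.u_def B.u_def using m A.m_pos by simp
  have ua: "A.u = k * (n div p)" and ub: "B.u = k' * (n div p)"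
    by (simp_all add: A.u_def B.u_def A.m_def B.m_def)
  have "(2 + A.u * (1 + v)) mod n = skew_formula n A.u v 2" using A.g2 by simp
  also have "\<dots> = skew_formula n B.u v' 2" using eq ua ub by simp
  also have "\<dots> = (2 + B.u * (1 + v')) mod n" using B.g2 by simp
  finally have "(2 + A.u * (1 + v)) mod n = (2 + A.u * (1 + v')) mod n" using \<open>A.u = B.u\<close> by simp
  moreover have "2 + A.u * (1 + v) = (2 + A.u) + A.u * v" "2 + A.u * (1 + v') = (2 + A.u) + A.u * v'"
    by (simp_all add: algebra_simps)
  ultimately have "[(2 + A.u) + A.u * v = (2 + A.u) + A.u * v'] (mod n)" unfolding cong_def by simp
  then have "[A.u * v = A.u * v'] (mod n)" using cong_add_lcancel_nat by blast
  then have "[A.m * (k * v) = A.m * (k * v')] (mod A.m * p)" unfolding A.u_def using A.nm by (simp add: ac_simps)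
  then have "[k * v = k * v'] (mod p)" using A.m_pos by (simp add: cong_def mod_mult_mult1)
  moreover have "coprime k p" using A.coprime_lt A.k1 A.k_lt by simp
  ultimately have "[v = v'] (mod p)" using cong_mult_lcancel_nat by blast
  moreover have "v < p" "v' < p" using A.vp B.vp A.p_gt1 by auto
  ultimately have "v = v'" using cong_less_modulus_unique_nat by blast
  then show ?thesis using kk by simp
qed



lemma classify_ext:
  assumes p: "prime p" and n: "0 < n" and phi: "\<phi> \<in> proper_skews_of_order n p"
  shows "p dvd n \<and> (\<exists>k v. formula_ctx n p k v \<and> \<phi> = skew_formula n (k * (n div p)) v)"
proof -
  have out: "\<forall>x. n \<le> x \<longrightarrow> \<phi> x = x" and ps: "proper_skew_morphism n \<phi>" and o: "perm_order n \<phi> = p"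
    using phi unfolding proper_skews_of_order_def by auto
  interpret skewp n p \<phi> using skewp_intro[OF p n ps o] .
  obtain k v where kv: "1 \<le> k" "k \<le> p - 1" "2 \<le> v" "v \<le> p - 1" "ord p v dvd n"
    "\<forall>a<n. \<phi> a = skew_formula n (k * (n div p)) v a" and pn: "p dvd n"
    using classification by blast
  have ctx: "formula_ctx n p k v" using kv pn p n by (intro formula_ctx.intro) auto
  have "\<phi> = skew_formula n (k * (n div p)) v"
  proof
    fix x show "\<phi> x = skew_formula n (k * (n div p)) v x"
      using kv(6) out by (cases "x < n") (auto simp: skew_formula_def)
  qed
  then show ?thesis using ctx pn by blast
qed

lemma ctx_iff: "prime p \<Longrightarrow> 0 < n \<Longrightarrow> p dvd n \<Longrightarrow>
   formula_ctx n p k v \<longleftrightarrow> (1 \<le> k \<and> k \<le> p - 1 \<and> 2 \<le> v \<and> v \<le> p - 1 \<and> ord p v dvd n)"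
  using formula_ctx_def by auto

lemma int_poly: assumes "2 \<le> p" shows "int ((p - 1) * (p - 2)) = int p ^ 2 - 3 * int p + 2"
proof -
  have "int ((p - 1) * (p - 2)) = int (p - 1) * int (p - 2)" by (simp only: of_nat_mult)
  also have "\<dots> = (int p - 1) * (int p - 2)" using assms by (simp add: of_nat_diff)
  also have "\<dots> = int p ^ 2 - 3 * int p + 2" by (simp add: power2_eq_square algebra_simps)
  finally show ?thesis .
qed

lemma main_count:
  fixes p n :: nat
  assumes p: "prime p" and n: "0 < n" and pn: "p dvd n"
  defines "V \<equiv> {v \<in> {2..p - 1}. ord p v dvd n}"
  shows "proper_skews_of_order n p =
            {skew_formula n u v | u v. u \<in> {k * (n div p) | k. 1 \<le> k \<and> k \<le> p - 1}
                                    \<and> v \<in> {2..p - 1} \<and> ord p v dvd n}"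
    and "card (proper_skews_of_order n p) = (p - 1) * card V"
proof -
  define F where "F = (\<lambda>(k, v). skew_formula n (k * (n div p)) v)"
  define KV where "KV = {1..p - 1} \<times> V"
  have ctx: "formula_ctx n p k v \<longleftrightarrow> (k, v) \<in> KV" for k v
    using ctx_iff[OF p n pn] unfolding KV_def V_def by auto
  have e1: "proper_skews_of_order n p = F ` KV"
  proof
    show "proper_skews_of_order n p \<subseteq> F ` KV"
    proof
      fix \<phi> assume "\<phi> \<in> proper_skews_of_order n p"
      then obtain k v where "formula_ctx n p k v" "\<phi> = skew_formula n (k * (n div p)) v"
        using classify_ext[OF p n] by blast
      then show "\<phi> \<in> F ` KV" unfolding F_def using ctx by force
    qed
    show "F ` KV \<subseteq> proper_skews_of_order n p"
    proof
      fix \<phi> assume "\<phi> \<in> F ` KV"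
      then obtain k v where kv: "(k, v) \<in> KV" "\<phi> = skew_formula n (k * (n div p)) v"
        unfolding F_def by auto
      interpret formula_ctx n p k v using kv ctx by blast
      show "\<phi> \<in> proper_skews_of_order n p" using g_in kv unfolding u_def m_def by simp
    qed
  qed
  have e2: "{skew_formula n u v | u v. u \<in> {k * (n div p) | k. 1 \<le> k \<and> k \<le> p - 1}
                                    \<and> v \<in> {2..p - 1} \<and> ord p v dvd n} = F ` KV"
  proof (intro equalityI subsetI)
    fix \<phi> assume "\<phi> \<in> {skew_formula n u v | u v. u \<in> {k * (n div p) | k. 1 \<le> k \<and> k \<le> p - 1}
                                    \<and> v \<in> {2..p - 1} \<and> ord p v dvd n}"
    then obtain k v where "\<phi> = skew_formula n (k * (n div p)) v" "1 \<le> k" "k \<le> p - 1"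
      "v \<in> {2..p - 1}" "ord p v dvd n" by blast
    then have "\<phi> = F (k, v)" "(k, v) \<in> KV" unfolding F_def KV_def V_def by auto
    then show "\<phi> \<in> F ` KV" by blast
  next
    fix \<phi> assume "\<phi> \<in> F ` KV"
    then obtain k v where "(k, v) \<in> KV" "\<phi> = F (k, v)" by auto
    then have "\<phi> = skew_formula n (k * (n div p)) v" "1 \<le> k" "k \<le> p - 1"
      "v \<in> {2..p - 1}" "ord p v dvd n" unfolding F_def KV_def V_def by auto
    then show "\<phi> \<in> {skew_formula n u v | u v. u \<in> {k * (n div p) | k. 1 \<le> k \<and> k \<le> p - 1}
                                    \<and> v \<in> {2..p - 1} \<and> ord p v dvd n}" by blast
  qed
  show "proper_skews_of_order n p =
            {skew_formula n u v | u v. u \<in> {k * (n div p) | k. 1 \<le> k \<and> k \<le> p - 1}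
                                    \<and> v \<in> {2..p - 1} \<and> ord p v dvd n}"
    using e1 e2 by simp
  have inj: "inj_on F KV"
  proof (rule inj_onI)
    fix x y assume x: "x \<in> KV" and y: "y \<in> KV" and eq: "F x = F y"
    obtain k v k' v' where xy: "x = (k, v)" "y = (k', v')" by (cases x, cases y) auto
    show "x = y" using formula_inj[of n p k v k' v'] ctx x y eq xy unfolding F_def by simp
  qed
  have "card (proper_skews_of_order n p) = card KV" using e1 inj card_image by simp
  also have "\<dots> = (p - 1) * card V" unfolding KV_def by (simp add: card_cartesian_product)
  finally show "card (proper_skews_of_order n p) = (p - 1) * card V" .
qed

lemma card_V:
  fixes p n :: nat
  assumes p: "prime p" and n: "0 < n"
  shows "card {v \<in> {2..p - 1}. ord p v dvd n} = (\<Sum>k \<in> {k. k dvd p - 1 \<and> k dvd n \<and> k \<noteq> 1}. totient k)"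
proof -
  define D where "D = {k. k dvd p - 1 \<and> k dvd n \<and> k \<noteq> 1}"
  have p1: "1 < p" using p prime_gt_1_nat by blast
  have "{v \<in> {2..p - 1}. ord p v dvd n} = (\<Union>d\<in>D. {x \<in> totatives p. ord p x = d})"
  proof (intro equalityI subsetI)
    fix v assume v: "v \<in> {v \<in> {2..p - 1}. ord p v dvd n}"
    then have v2: "2 \<le> v" "v < p" using p1 by auto
    have "\<not> p dvd v" using v2 by (auto dest: dvd_imp_le)
    then have "coprime p v" using p prime_imp_coprime by blast
    then have "coprime v p" by (simp add: coprime_commute)
    then have "v \<in> totatives p" using v2 by (auto simp: totatives_def)
    moreover have "ord p v \<in> D" unfolding D_def using v v2 prime_ord_dvd[OF p, of v] ord_ne1[OF p, of v] by auto
    ultimately show "v \<in> (\<Union>d\<in>D. {x \<in> totatives p. ord p x = d})" by blast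
  next
    fix x assume "x \<in> (\<Union>d\<in>D. {x \<in> totatives p. ord p x = d})"
    then obtain d where d: "d \<in> D" "x \<in> totatives p" "ord p x = d" by blast
    have "x \<noteq> 1" using d unfolding D_def by auto
    moreover have "x \<noteq> p" using d p1 by (auto simp: totatives_def)
    ultimately show "x \<in> {v \<in> {2..p - 1}. ord p v dvd n}" using d unfolding D_def
      by (auto simp: totatives_def)
  qed
  also have "card \<dots> = (\<Sum>d\<in>D. card {x \<in> totatives p. ord p x = d})"
  proof (rule card_UN_disjoint)
    have "D \<subseteq> {d. d dvd p - 1}" unfolding D_def by auto
    moreover have "finite {d. d dvd p - 1}" using finite_divisors_nat[of "p - 1"] p1 by simp
    ultimately show "finite D" using finite_subset by blast
  qed auto
  also have "\<dots> = (\<Sum>d\<in>D. totient d)"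
    using prime_card_elements_with_ord_eq_totient[OF p1 p] unfolding D_def by (intro sum.cong) auto
  finally show ?thesis unfolding D_def .
qed



theorem theorem6p5:
  fixes p n :: nat
  assumes "prime p" and "0 < n"
  shows "((\<exists>\<phi>. proper_skew_morphism n \<phi> \<and> perm_order n \<phi> = p)
            \<longleftrightarrow> (p dvd n \<and> gcd (p - 1) n \<ge> 2))
       \<and> (p dvd n \<longrightarrow> proper_skews_of_order n p =
            {skew_formula n u v | u v. u \<in> {k * (n div p) | k. 1 \<le> k \<and> k \<le> p - 1}
                                    \<and> v \<in> {2..p - 1} \<and> ord p v dvd n})
       \<and> (p dvd n \<longrightarrow> card (proper_skews_of_order n p) =
            (\<Sum>k \<in> {k. k dvd p - 1 \<and> k dvd n \<and> k \<noteq> 1}. totient k) * (p - 1))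
       \<and> int (card (proper_skews_of_order n p)) \<le> int p ^ 2 - 3 * int p + 2
       \<and> (p dvd n \<longrightarrow>
            (int (card (proper_skews_of_order n p)) = int p ^ 2 - 3 * int p + 2
              \<longleftrightarrow> (p - 1) * p dvd n))"
proof -
  note p = assms(1) and n = assms(2)
  have p1: "1 < p" using p prime_gt_1_nat by blast
  define V where "V = {v \<in> {2..p - 1}. ord p v dvd n}"
  have cardV: "card V = (\<Sum>k \<in> {k. k dvd p - 1 \<and> k dvd n \<and> k \<noteq> 1}. totient k)"
    unfolding V_def using card_V[OF p n] .
  have Vsub: "V \<subseteq> {2..p - 1}" unfolding V_def by auto
  have cI: "card {2..p - 1} = p - 2" by simp
  have cardVle: "card V \<le> p - 2" using card_mono[OF _ Vsub] cI by simp
  have empty: "proper_skews_of_order n p = {}" if "\<not> p dvd n"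
    using classify_ext[OF p n] that by blast
  have cnt: "card (proper_skews_of_order n p) = (p - 1) * card V" if "p dvd n"
    using main_count(2)[OF p n that] unfolding V_def by simp
  have c1: "(\<exists>\<phi>. proper_skew_morphism n \<phi> \<and> perm_order n \<phi> = p) \<longleftrightarrow> (p dvd n \<and> gcd (p - 1) n \<ge> 2)"
  proof
    assume "\<exists>\<phi>. proper_skew_morphism n \<phi> \<and> perm_order n \<phi> = p"
    then obtain \<phi> where ps: "proper_skew_morphism n \<phi>" and o: "perm_order n \<phi> = p" by blast
    interpret skewp n p \<phi> using skewp_intro[OF p n ps o] .
    obtain k v where kv: "2 \<le> v" "v \<le> p - 1" "ord p v dvd n" and pn: "p dvd n"
      using classification by blast
    have d1: "ord p v dvd p - 1" using prime_ord_dvd[OF p, of v] kv p1 by simp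
    have d2: "ord p v \<noteq> 1" using ord_ne1[OF p, of v] kv p1 by simp
    have d0: "ord p v \<noteq> 0" using d1 p1 by (intro notI) simp
    have "ord p v dvd gcd (p - 1) n" using d1 kv by simp
    moreover have "0 < gcd (p - 1) n" using n by simp
    ultimately have "ord p v \<le> gcd (p - 1) n" by (rule dvd_imp_le)
    moreover have "2 \<le> ord p v" using d0 d2 by (cases "ord p v") auto
    ultimately show "p dvd n \<and> gcd (p - 1) n \<ge> 2" using pn by linarith
  next
    assume h: "p dvd n \<and> gcd (p - 1) n \<ge> 2"
    have "gcd (p - 1) n dvd p - 1" by simp
    moreover have "gcd (p - 1) n \<noteq> 1" using h by simp
    ultimately obtain x where x: "2 \<le> x" "x \<le> p - 1" "ord p x = gcd (p - 1) n"
      using exists_with_ord[OF p] by blast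
    have "ord p x dvd n" using x by simp
    then have ctx: "formula_ctx n p 1 x" using x h p n p1 by (intro formula_ctx.intro) auto
    interpret formula_ctx n p 1 x by (rule ctx)
    have "skew_formula n u x \<in> proper_skews_of_order n p" by (rule g_in)
    then show "\<exists>\<phi>. proper_skew_morphism n \<phi> \<and> perm_order n \<phi> = p"
      unfolding proper_skews_of_order_def by blast
  qed
  have c2: "p dvd n \<longrightarrow> proper_skews_of_order n p =
            {skew_formula n u v | u v. u \<in> {k * (n div p) | k. 1 \<le> k \<and> k \<le> p - 1}
                                    \<and> v \<in> {2..p - 1} \<and> ord p v dvd n}"
    using main_count(1)[OF p n] by blast
  have c3: "p dvd n \<longrightarrow> card (proper_skews_of_order n p) =
            (\<Sum>k \<in> {k. k dvd p - 1 \<and> k dvd n \<and> k \<noteq> 1}. totient k) * (p - 1)"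
    using cnt cardV by (simp add: mult.commute)
  have ip: "int ((p - 1) * (p - 2)) = int p ^ 2 - 3 * int p + 2" using int_poly[of p] p1 by simp
  have cle: "card (proper_skews_of_order n p) \<le> (p - 1) * (p - 2)"
  proof (cases "p dvd n")
    case True then show ?thesis using cnt cardVle by simp
  next
    case False then show ?thesis using empty by simp
  qed
  have c4: "int (card (proper_skews_of_order n p)) \<le> int p ^ 2 - 3 * int p + 2"
    unfolding ip[symmetric] using cle by (simp only: of_nat_le_iff)
  have c5: "p dvd n \<longrightarrow>
            (int (card (proper_skews_of_order n p)) = int p ^ 2 - 3 * int p + 2
              \<longleftrightarrow> (p - 1) * p dvd n)"
  proof
    assume pn: "p dvd n"
    have "int (card (proper_skews_of_order n p)) = int p ^ 2 - 3 * int p + 2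
          \<longleftrightarrow> card (proper_skews_of_order n p) = (p - 1) * (p - 2)"
      unfolding ip[symmetric] by (simp only: of_nat_eq_iff)
    also have "\<dots> \<longleftrightarrow> card V = p - 2" using cnt[OF pn] p1 by simp
    also have "\<dots> \<longleftrightarrow> V = {2..p - 1}"
    proof
      assume "card V = p - 2"
      then show "V = {2..p - 1}" using card_subset_eq[OF _ Vsub] cI by simp
    qed simp
    also have "\<dots> \<longleftrightarrow> (p - 1) dvd n"
    proof
      assume V: "V = {2..p - 1}"
      show "(p - 1) dvd n"
      proof (cases "p = 2")
        case True then show ?thesis by simp
      next
        case False
        then have "p - 1 \<noteq> 1" using p1 by simp
        then obtain x where x: "2 \<le> x" "x \<le> p - 1" "ord p x = p - 1"
          using exists_with_ord[OF p dvd_refl] by blast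
        then have "x \<in> V" using V by simp
        then show ?thesis using x unfolding V_def by simp
      qed
    next
      assume d: "(p - 1) dvd n"
      show "V = {2..p - 1}"
      proof (intro equalityI subsetI)
        fix v assume v: "v \<in> {2..p - 1}"
        then have "v < p" "0 < v" using p1 by auto
        then have "ord p v dvd p - 1" using prime_ord_dvd[OF p, of v] by simp
        then have "ord p v dvd n" using d by (rule dvd_trans)
        then show "v \<in> V" using v unfolding V_def by blast
      qed (use Vsub in auto)
    qed
    also have "\<dots> \<longleftrightarrow> (p - 1) * p dvd n"
    proof
      assume "(p - 1) dvd n"
      moreover have "coprime (p - 1) p" using p1 coprime_Suc_right_nat[of "p - 1"] by simp
      ultimately show "(p - 1) * p dvd n" using pn divides_mult[of "p - 1" n p] by blast
    qed (rule dvd_mult_left)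
    finally show "int (card (proper_skews_of_order n p)) = int p ^ 2 - 3 * int p + 2
              \<longleftrightarrow> (p - 1) * p dvd n" .
  qed
  show ?thesis using c1 c2 c3 c4 c5 by blast
qed


end
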